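(* Let $p$ be a design (probability distribution of a random treatment vector $\mathbf Z\in\{0,1\}^n$) such that with probability one at least one unit is treated and at least one unit is in control. Suppose each unit $i$ has potential outcomes $Y_i(z,e)$, $z\in\{0,1\}$, $e\in\{0,1,\dots,K_i-1\}$, of the form $Y_i(z,e)=A_i(z)+B_i(e)+zC_i(e)$ with $B_i(0)=C_i(0)=0$. Let $\mathrm{DTE}=\frac1n\sum_{i=1}^n\big(Y_i(1,0)-Y_i(0,0)\big)$ and let $$\hat\beta_{naive}=\frac{\sum_i Y_i^{obs}Z_i}{\sum_i Z_i}-\frac{\sum_i Y_i^{obs}(1-Z_i)}{\sum_i(1-Z_i)}.$$ Then $\mathrm{DTE}=\frac1n\sum_{i=1}^n(A_i(1)-A_i(0))$ and $$\mathbb E[\hat\beta_{naive}]-\mathrm{DTE}=\sum_i\Big(A_i(1)\big(\alpha_i(1)-\tfrac1n\big)-A_i(0)\big(\alpha_i(0)-\tfrac1n\big)\Big)+\sum_i\sum_{e\neq0}B_i(e)\big(\alpha_i(1,e)-\alpha_i(0,e)\big)+\sum_i\sum_{e\ne0}C_i(e)\,\alpha_i(1,e),$$ where $\alpha_i(z,e)=\mathbb E\!\left[\frac{I(Z_i=z,E_i=e)}{\sum_{j}I(Z_j=z)}\right]$ and $\alpha_i(z)=\sum_e\alpha_i(z,e)=\mathbb E\!\left[\frac{I(Z_i=z)}{\sum_j I(Z_j=z)}\right]$.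
   Context: Each unit $i$ has an interference neighborhood $N_i$ and an exposure function $f$ mapping $\{0,1\}^{N_i}$ onto $\{0,\dots,K_i-1\}$; the random exposure is $E_i=f(\mathbf Z_{N_i})$. Exposure level $0$ means "not exposed". The potential outcomes $Y_i(z,e)$ are fixed numbers; the observed outcome is $Y_i^{obs}=Y_i(Z_i,E_i)$ and all expectations are over the design. *)

theory Defs
  imports "HOL-Probability.Probability"
begin

text \<open>Units are the elements of a finite type 'u; a treatment assignment is
  a function 'u => bool (True = treated). A design is a pmf on assignments.\<close>

definition Yobs :: "('u \<Rightarrow> bool \<Rightarrow> nat \<Rightarrow> real) \<Rightarrow> ('u \<Rightarrow> ('u \<Rightarrow> bool) \<Rightarrow> nat)
    \<Rightarrow> 'u \<Rightarrow> ('u \<Rightarrow> bool) \<Rightarrow> real" where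
  "Yobs Y E i Z = Y i (Z i) (E i Z)"

definition beta_naive :: "('u::finite \<Rightarrow> bool \<Rightarrow> nat \<Rightarrow> real) \<Rightarrow> ('u \<Rightarrow> ('u \<Rightarrow> bool) \<Rightarrow> nat)
    \<Rightarrow> ('u \<Rightarrow> bool) \<Rightarrow> real" where
  "beta_naive Y E Z =
     (\<Sum>i\<in>UNIV. Yobs Y E i Z * of_bool (Z i)) / (\<Sum>i\<in>UNIV. of_bool (Z i))
   - (\<Sum>i\<in>UNIV. Yobs Y E i Z * (1 - of_bool (Z i))) / (\<Sum>i\<in>UNIV. 1 - of_bool (Z i))"

definition DTE :: "('u::finite \<Rightarrow> bool \<Rightarrow> nat \<Rightarrow> real) \<Rightarrow> real" where
  "DTE Y = (1 / real CARD('u)) * (\<Sum>i\<in>UNIV. Y i True 0 - Y i False 0)"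

definition alpha_ze :: "('u::finite \<Rightarrow> bool) pmf \<Rightarrow> ('u \<Rightarrow> ('u \<Rightarrow> bool) \<Rightarrow> nat)
    \<Rightarrow> 'u \<Rightarrow> bool \<Rightarrow> nat \<Rightarrow> real" where
  "alpha_ze p E i z e = measure_pmf.expectation p
     (\<lambda>Z. of_bool (Z i = z \<and> E i Z = e) / (\<Sum>j\<in>UNIV. of_bool (Z j = z)))"

definition alpha_z :: "('u::finite \<Rightarrow> bool) pmf \<Rightarrow> 'u \<Rightarrow> bool \<Rightarrow> real" where
  "alpha_z p i z = measure_pmf.expectation p
     (\<lambda>Z. of_bool (Z i = z) / (\<Sum>j\<in>UNIV. of_bool (Z j = z)))"

end

theory Submission
  imports Defs
begin

lemma collapse:
  fixes g :: "nat \<Rightarrow> real"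
  assumes "g 0 = 0" "e0 < K"
  shows "(\<Sum>e\<in>{1..<K}. g e * (of_bool (e0 = e) * c)) = g e0 * c"
proof -
  have "(\<Sum>e\<in>{1..<K}. g e * (of_bool (e0 = e) * c)) = (\<Sum>e\<in>{1..<K}. if e = e0 then g e * c else 0)"
    by (rule sum.cong) auto
  also have "\<dots> = (if e0 \<in> {1..<K} then g e0 * c else 0)" by (simp add: sum.delta')
  also have "\<dots> = g e0 * c" using assms by (cases "e0 = 0") auto
  finally show ?thesis .
qed

lemma den0: "(\<Sum>i\<in>UNIV. 1 - of_bool (Z i) :: real) = (\<Sum>j\<in>UNIV. of_bool (Z j = False))"
  by (rule sum.cong) auto

lemma den1: "(\<Sum>i\<in>UNIV. of_bool (Z i) :: real) = (\<Sum>j\<in>UNIV. of_bool (Z j = True))"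
  by simp

lemma unit_eq:
  fixes Y :: "'u \<Rightarrow> bool \<Rightarrow> nat \<Rightarrow> real"
  assumes E_range: "\<And>i Z. E i Z < K i"
    and Y_form: "\<And>i z e. e < K i \<Longrightarrow> Y i z e = A i z + B i e + of_bool z * C i e"
    and B0: "\<And>i. B i 0 = 0"
    and C0: "\<And>i. C i 0 = 0"
  shows "Yobs Y E i Z * of_bool (Z i) / n1 - Yobs Y E i Z * (1 - of_bool (Z i)) / n0 =
     (A i True * (of_bool (Z i = True) / n1) - A i False * (of_bool (Z i = False) / n0))
   + (\<Sum>e\<in>{1..<K i}. B i e * (of_bool (Z i = True \<and> E i Z = e) / n1 - of_bool (Z i = False \<and> E i Z = e) / n0))
   + (\<Sum>e\<in>{1..<K i}. C i e * (of_bool (Z i = True \<and> E i Z = e) / n1))"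
proof (cases "Z i")
  case True
  have b: "(\<Sum>e\<in>{1..<K i}. B i e * (of_bool (Z i = True \<and> E i Z = e) / n1 - of_bool (Z i = False \<and> E i Z = e) / n0))
     = B i (E i Z) * (1 / n1)"
    using collapse[of "B i" "E i Z" "K i" "1/n1"] True B0 E_range by simp
  have c: "(\<Sum>e\<in>{1..<K i}. C i e * (of_bool (Z i = True \<and> E i Z = e) / n1)) = C i (E i Z) * (1 / n1)"
    using collapse[of "C i" "E i Z" "K i" "1/n1"] True C0 E_range by simp
  show ?thesis unfolding b c Yobs_def using True Y_form[OF E_range] by (simp add: add_divide_distrib)
next
  case False
  have b: "(\<Sum>e\<in>{1..<K i}. B i e * (of_bool (Z i = True \<and> E i Z = e) / n1 - of_bool (Z i = False \<and> E i Z = e) / n0))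
     = B i (E i Z) * (- 1 / n0)"
    using collapse[of "B i" "E i Z" "K i" "-1/n0"] False B0 E_range by simp
  have c: "(\<Sum>e\<in>{1..<K i}. C i e * (of_bool (Z i = True \<and> E i Z = e) / n1)) = 0"
    using False by simp
  show ?thesis unfolding b c Yobs_def using False Y_form[OF E_range] by (simp add: add_divide_distrib)
qed

lemma exp_scale:
  "measure_pmf.expectation p (\<lambda>Z. (a::real) * f Z / g Z) = a * measure_pmf.expectation p (\<lambda>Z. f Z / g Z)"
  using integral_mult_right_zero[of p a "\<lambda>Z. f Z / g Z"] by (simp add: times_divide_eq_right)

theorem proposition10:
  fixes p :: "('u::finite \<Rightarrow> bool) pmf"
    and N :: "'u \<Rightarrow> 'u set"
    and E :: "'u \<Rightarrow> ('u \<Rightarrow> bool) \<Rightarrow> nat"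
    and K :: "'u \<Rightarrow> nat"
    and Y :: "'u \<Rightarrow> bool \<Rightarrow> nat \<Rightarrow> real"
    and A :: "'u \<Rightarrow> bool \<Rightarrow> real"
    and B C :: "'u \<Rightarrow> nat \<Rightarrow> real"
  assumes design: "\<forall>Z\<in>set_pmf p. (\<exists>i. Z i) \<and> (\<exists>j. \<not> Z j)"
    and E_local: "\<And>i Z Z'. (\<forall>j\<in>N i. Z j = Z' j) \<Longrightarrow> E i Z = E i Z'"
    and E_range: "\<And>i Z. E i Z < K i"
    and E_onto: "\<And>i e. e < K i \<Longrightarrow> \<exists>Z. E i Z = e"
    and Y_form: "\<And>i z e. e < K i \<Longrightarrow> Y i z e = A i z + B i e + of_bool z * C i e"
    and B0: "\<And>i. B i 0 = 0"
    and C0: "\<And>i. C i 0 = 0"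
  shows "DTE Y = (1 / real CARD('u)) * (\<Sum>i\<in>UNIV. A i True - A i False)
     \<and> measure_pmf.expectation p (beta_naive Y E) - DTE Y =
         (\<Sum>i\<in>UNIV. A i True * (alpha_z p i True - 1 / real CARD('u))
                    - A i False * (alpha_z p i False - 1 / real CARD('u)))
       + (\<Sum>i\<in>UNIV. \<Sum>e\<in>{1..<K i}. B i e * (alpha_ze p E i True e - alpha_ze p E i False e))
       + (\<Sum>i\<in>UNIV. \<Sum>e\<in>{1..<K i}. C i e * alpha_ze p E i True e)"
proof -
  have K0: "0 < K i" for i using E_range[of i undefined] by simp
  have dte: "DTE Y = (1 / real CARD('u)) * (\<Sum>i\<in>UNIV. A i True - A i False)"
    unfolding DTE_def using Y_form[OF K0] B0 C0 by simp
  define n1 where "n1 Z = (\<Sum>j\<in>UNIV. of_bool (Z j = True) :: real)" for Z :: "'u \<Rightarrow> bool"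
  define n0 where "n0 Z = (\<Sum>j\<in>UNIV. of_bool (Z j = False) :: real)" for Z :: "'u \<Rightarrow> bool"
  have pw: "beta_naive Y E Z =
     (\<Sum>i\<in>UNIV. A i True * (of_bool (Z i = True) / n1 Z) - A i False * (of_bool (Z i = False) / n0 Z))
   + (\<Sum>i\<in>UNIV. \<Sum>e\<in>{1..<K i}. B i e * (of_bool (Z i = True \<and> E i Z = e) / n1 Z - of_bool (Z i = False \<and> E i Z = e) / n0 Z))
   + (\<Sum>i\<in>UNIV. \<Sum>e\<in>{1..<K i}. C i e * (of_bool (Z i = True \<and> E i Z = e) / n1 Z))" for Z
  proof -
    have "beta_naive Y E Z = (\<Sum>i\<in>UNIV. Yobs Y E i Z * of_bool (Z i) / n1 Z - Yobs Y E i Z * (1 - of_bool (Z i)) / n0 Z)"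
      unfolding beta_naive_def den0 den1[of Z] unfolding n1_def n0_def sum_divide_distrib by (simp only: sum_subtractf)
    also have "\<dots> = (\<Sum>i\<in>UNIV. A i True * (of_bool (Z i = True) / n1 Z) - A i False * (of_bool (Z i = False) / n0 Z))
   + (\<Sum>i\<in>UNIV. \<Sum>e\<in>{1..<K i}. B i e * (of_bool (Z i = True \<and> E i Z = e) / n1 Z - of_bool (Z i = False \<and> E i Z = e) / n0 Z))
   + (\<Sum>i\<in>UNIV. \<Sum>e\<in>{1..<K i}. C i e * (of_bool (Z i = True \<and> E i Z = e) / n1 Z))"
      unfolding sum.distrib[symmetric] by (rule sum.cong[OF refl], rule unit_eq[where E=E and K=K and Y=Y and A=A and B=B and C=C, OF E_range Y_form B0 C0])
    finally show ?thesis .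
  qed
  have int: "integrable (measure_pmf p) f" for f :: "('u \<Rightarrow> bool) \<Rightarrow> real"
    by (rule integrable_measure_pmf_finite) simp
  have ex: "measure_pmf.expectation p (beta_naive Y E) =
         (\<Sum>i\<in>UNIV. A i True * alpha_z p i True - A i False * alpha_z p i False)
       + (\<Sum>i\<in>UNIV. \<Sum>e\<in>{1..<K i}. B i e * (alpha_ze p E i True e - alpha_ze p E i False e))
       + (\<Sum>i\<in>UNIV. \<Sum>e\<in>{1..<K i}. C i e * alpha_ze p E i True e)"
    unfolding pw alpha_z_def alpha_ze_def n1_def n0_def
    by (simp add: int Bochner_Integration.integral_add Bochner_Integration.integral_diff
        Bochner_Integration.integral_sum exp_scale)
  show ?thesis
    using dte ex
    by (simp add: algebra_simps sum_subtractf sum.distrib sum_distrib_left)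
qed

end
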